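(* For every integer $k \geq 2$ there exists a $\chi_\rho$-critical tree $T$ with $\chi_{\rho}(T)=k$.
   Context: A $k$-packing coloring of a graph $G$ is a map $c:V(G)\to\{1,\ldots,k\}$ such that two distinct vertices $u,v$ with $c(u)=c(v)=i$ satisfy $d_G(u,v)>i$; $\chi_\rho(G)$ is the smallest $k$ for which such a coloring exists. $G$ is $\chi_\rho$-critical if $\chi_\rho(H)<\chi_\rho(G)$ for every proper subgraph $H$ of $G$. *)

theory Defs
  imports Main
begin

definition graph :: "'a set \<Rightarrow> 'a set set \<Rightarrow> bool" where
  "graph V E \<longleftrightarrow> (\<forall>e\<in>E. \<exists>u v. u \<noteq> v \<and> u \<in> V \<and> v \<in> V \<and> e = {u, v})"

definition adj :: "'a set set \<Rightarrow> 'a \<Rightarrow> 'a \<Rightarrow> bool" where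
  "adj E u v \<longleftrightarrow> {u, v} \<in> E"

text \<open>A walk, given as the list of its vertices; its length is the number of edges.\<close>
definition is_walk :: "'a set \<Rightarrow> 'a set set \<Rightarrow> 'a list \<Rightarrow> bool" where
  "is_walk V E p \<longleftrightarrow> p \<noteq> [] \<and> set p \<subseteq> V \<and>
     (\<forall>i. Suc i < length p \<longrightarrow> adj E (p ! i) (p ! Suc i))"

definition dist_le :: "'a set \<Rightarrow> 'a set set \<Rightarrow> 'a \<Rightarrow> 'a \<Rightarrow> nat \<Rightarrow> bool" where
  "dist_le V E u v n \<longleftrightarrow>
     (\<exists>p. is_walk V E p \<and> hd p = u \<and> last p = v \<and> length p \<le> Suc n)"

definition connected_graph :: "'a set \<Rightarrow> 'a set set \<Rightarrow> bool" where
  "connected_graph V E \<longleftrightarrow> (\<forall>u\<in>V. \<forall>v\<in>V. \<exists>n. dist_le V E u v n)"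

definition is_cycle :: "'a set \<Rightarrow> 'a set set \<Rightarrow> 'a list \<Rightarrow> bool" where
  "is_cycle V E p \<longleftrightarrow> length p \<ge> 3 \<and> distinct p \<and> is_walk V E p \<and>
     adj E (last p) (hd p)"

definition acyclic_graph :: "'a set \<Rightarrow> 'a set set \<Rightarrow> bool" where
  "acyclic_graph V E \<longleftrightarrow> (\<nexists>p. is_cycle V E p)"

definition tree :: "'a set \<Rightarrow> 'a set set \<Rightarrow> bool" where
  "tree V E \<longleftrightarrow> graph V E \<and> finite V \<and> V \<noteq> {} \<and> connected_graph V E \<and> acyclic_graph V E"

definition packing_coloring :: "'a set \<Rightarrow> 'a set set \<Rightarrow> nat \<Rightarrow> ('a \<Rightarrow> nat) \<Rightarrow> bool" where
  "packing_coloring V E k c \<longleftrightarrow>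
     (\<forall>v\<in>V. c v \<in> {1..k}) \<and>
     (\<forall>u\<in>V. \<forall>v\<in>V. u \<noteq> v \<and> c u = c v \<longrightarrow> \<not> dist_le V E u v (c u))"

definition packing_chromatic :: "'a set \<Rightarrow> 'a set set \<Rightarrow> nat" where
  "packing_chromatic V E = (LEAST k. \<exists>c. packing_coloring V E k c)"

definition subgraph :: "'a set \<Rightarrow> 'a set set \<Rightarrow> 'a set \<Rightarrow> 'a set set \<Rightarrow> bool" where
  "subgraph V' E' V E \<longleftrightarrow> graph V' E' \<and> V' \<subseteq> V \<and> E' \<subseteq> E"

definition packing_critical :: "'a set \<Rightarrow> 'a set set \<Rightarrow> bool" where
  "packing_critical V E \<longleftrightarrow>
     (\<forall>V' E'. subgraph V' E' V E \<and> (V', E') \<noteq> (V, E) \<longrightarrow>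
        packing_chromatic V' E' < packing_chromatic V E)"

end

theory Submission
  imports Defs
begin


lemma adj_sym: "adj E a b \<Longrightarrow> adj E b a"
  by (simp add: adj_def insert_commute)

lemma walk_single[simp]: "is_walk V E [a] \<longleftrightarrow> a \<in> V"
  by (simp add: is_walk_def)

lemma walk_Cons2[simp]: "is_walk V E (a # b # r) \<longleftrightarrow> a \<in> V \<and> adj E a b \<and> is_walk V E (b # r)"
proof
  assume h: "is_walk V E (a # b # r)"
  have "Suc 0 < length (a # b # r)" by simp
  then have "adj E ((a # b # r) ! 0) ((a # b # r) ! Suc 0)" using h unfolding is_walk_def by blast
  then have "adj E a b" by simp
  moreover have "is_walk V E (b # r)" unfolding is_walk_def
  proof (intro conjI allI impI)
    show "set (b # r) \<subseteq> V" using h by (simp add: is_walk_def)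
    fix i assume "Suc i < length (b # r)"
    then have "Suc (Suc i) < length (a # b # r)" by simp
    then have "adj E ((a # b # r) ! Suc i) ((a # b # r) ! Suc (Suc i))" using h unfolding is_walk_def by blast
    then show "adj E ((b # r) ! i) ((b # r) ! Suc i)" by simp
  qed simp
  ultimately show "a \<in> V \<and> adj E a b \<and> is_walk V E (b # r)" using h by (simp add: is_walk_def)
next
  assume h: "a \<in> V \<and> adj E a b \<and> is_walk V E (b # r)"
  show "is_walk V E (a # b # r)" unfolding is_walk_def
  proof (intro conjI allI impI)
    show "set (a # b # r) \<subseteq> V" using h by (simp add: is_walk_def)
    fix i assume i: "Suc i < length (a # b # r)"
    show "adj E ((a # b # r) ! i) ((a # b # r) ! Suc i)"
    proof (cases i)
      case 0 then show ?thesis using h by simp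
    next
      case (Suc j)
      then have "Suc j < length (b # r)" using i by simp
      then have "adj E ((b # r) ! j) ((b # r) ! Suc j)" using h unfolding is_walk_def by blast
      then show ?thesis using Suc by simp
    qed
  qed simp
qed

lemma walk_hd: "is_walk V E p \<Longrightarrow> hd p \<in> V"
  by (cases p) (auto simp: is_walk_def)

lemma walk_append: "is_walk V E p \<Longrightarrow> is_walk V E q \<Longrightarrow> last p = hd q \<Longrightarrow> is_walk V E (p @ tl q)"
proof (induction p rule: induct_list012)
  case 1 then show ?case by (simp add: is_walk_def)
next
  case (2 x)
  then have "q \<noteq> []" by (auto simp: is_walk_def)
  then have "q = hd q # tl q" by simp
  then show ?case using 2 by (metis append_Cons append_Nil last_ConsL)
next
  case (3 x y zs)
  then have "is_walk V E ((y # zs) @ tl q)" by simp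
  then show ?case using 3 by simp
qed

lemma walk_rev: "is_walk V E p \<Longrightarrow> is_walk V E (rev p)"
proof (induction p rule: induct_list012)
  case 1 then show ?case by simp
next
  case (2 x) then show ?case by simp
next
  case (3 x y zs)
  have w: "is_walk V E (rev (y # zs))" using 3 by simp
  have "y \<in> V" using walk_hd[of V E "y # zs"] 3 by simp
  then have w2: "is_walk V E [y, x]" using 3 by (auto intro: adj_sym)
  have "is_walk V E (rev (y # zs) @ tl [y, x])"
    by (rule walk_append[OF w w2]) simp
  then show ?case by simp
qed

lemma dist_trans: "dist_le V E u w n1 \<Longrightarrow> dist_le V E w v n2 \<Longrightarrow> dist_le V E u v (n1 + n2)"
proof -
  assume "dist_le V E u w n1" "dist_le V E w v n2"
  then obtain p q where p: "is_walk V E p" "hd p = u" "last p = w" "length p \<le> Suc n1"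
    and q: "is_walk V E q" "hd q = w" "last q = v" "length q \<le> Suc n2"
    unfolding dist_le_def by blast
  have ne: "p \<noteq> []" "q \<noteq> []" using p q by (auto simp: is_walk_def)
  have "is_walk V E (p @ tl q)" using walk_append[OF p(1) q(1)] p(3) q(2) by simp
  moreover have "hd (p @ tl q) = u" using ne p by simp
  moreover have "last (p @ tl q) = v"
  proof (cases "tl q = []")
    case True
    then have "q = [hd q]" using ne by (metis list.collapse)
    then show ?thesis using True p q by (metis append_Nil2 last_ConsL)
  next
    case False then show ?thesis using q ne by (simp add: last_tl)
  qed
  moreover have "length (p @ tl q) \<le> Suc (n1 + n2)" using p q ne by (cases q) auto
  ultimately show ?thesis unfolding dist_le_def by blast
qed

lemma dist_sym: "dist_le V E u v n \<Longrightarrow> dist_le V E v u n"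
  unfolding dist_le_def
  by (metis hd_rev last_rev length_rev walk_rev)

lemma dist_refl: "u \<in> V \<Longrightarrow> dist_le V E u u 0"
  unfolding dist_le_def by (rule exI[of _ "[u]"]) simp

lemma dist_adj: "u \<in> V \<Longrightarrow> v \<in> V \<Longrightarrow> adj E u v \<Longrightarrow> dist_le V E u v 1"
  unfolding dist_le_def by (rule exI[of _ "[u,v]"]) simp

lemma dist_2: "u \<in> V \<Longrightarrow> w \<in> V \<Longrightarrow> v \<in> V \<Longrightarrow> adj E u w \<Longrightarrow> adj E w v \<Longrightarrow> dist_le V E u v 2"
  unfolding dist_le_def by (rule exI[of _ "[u,w,v]"]) simp

lemma dist_mono_n: "dist_le V E u v n \<Longrightarrow> n \<le> n' \<Longrightarrow> dist_le V E u v n'"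
  unfolding dist_le_def by fastforce

lemma walk_mono: "is_walk V' E' p \<Longrightarrow> V' \<subseteq> V \<Longrightarrow> E' \<subseteq> E \<Longrightarrow> is_walk V E p"
  unfolding is_walk_def adj_def by blast

lemma dist_mono_g: "dist_le V' E' u v n \<Longrightarrow> V' \<subseteq> V \<Longrightarrow> E' \<subseteq> E \<Longrightarrow> dist_le V E u v n"
  unfolding dist_le_def using walk_mono by blast

lemma dist_1_cases: "dist_le V E u v 1 \<Longrightarrow> u = v \<or> adj E u v"
proof -
  assume "dist_le V E u v 1"
  then obtain p where p: "is_walk V E p" "hd p = u" "last p = v" "length p \<le> 2"
    unfolding dist_le_def by auto
  then have "p \<noteq> []" by (auto simp: is_walk_def)
  then consider a where "p = [a]" | a b where "p = [a, b]" using p(4)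
    by (cases p; cases "tl p") auto
  then show ?thesis using p by cases auto
qed



lemma coloring_exists: "finite V \<Longrightarrow> \<exists>c. packing_coloring V E (card V) c"
proof -
  assume f: "finite V"
  obtain g where g: "bij_betw g V {0..<card V}" using ex_bij_betw_finite_nat[OF f] by blast
  have "packing_coloring V E (card V) (\<lambda>x. Suc (g x))"
    unfolding packing_coloring_def
  proof (intro conjI ballI impI)
    fix v assume "v \<in> V"
    then have "g v < card V" using g by (auto simp: bij_betw_def)
    then show "Suc (g v) \<in> {1..card V}" by simp
  next
    fix u v assume "u \<in> V" "v \<in> V" "u \<noteq> v \<and> Suc (g u) = Suc (g v)"
    then show "\<not> dist_le V E u v (Suc (g u))" using g by (auto simp: bij_betw_def inj_on_def)
  qed
  then show ?thesis by blast
qed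

lemma coloring_mono: "packing_coloring V E k c \<Longrightarrow> k \<le> k' \<Longrightarrow> packing_coloring V E k' c"
  unfolding packing_coloring_def by auto

lemma chi_coloring: "finite V \<Longrightarrow> \<exists>c. packing_coloring V E (packing_chromatic V E) c"
proof -
  assume f: "finite V"
  have "\<exists>k c. packing_coloring V E k c" using coloring_exists[OF f, of E] by blast
  then show ?thesis unfolding packing_chromatic_def by (rule LeastI_ex)
qed

lemma chi_le: "packing_coloring V E k c \<Longrightarrow> packing_chromatic V E \<le> k"
  unfolding packing_chromatic_def by (rule Least_le) blast

lemma chi_ge: "finite V \<Longrightarrow> (\<And>k c. packing_coloring V E k c \<Longrightarrow> K \<le> k) \<Longrightarrow> K \<le> packing_chromatic V E"
proof -
  assume f: "finite V" and h: "\<And>k c. packing_coloring V E k c \<Longrightarrow> K \<le> k"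
  obtain c where "packing_coloring V E (packing_chromatic V E) c" using chi_coloring[OF f] by blast
  then show ?thesis by (rule h)
qed

lemma coloring_sub: "packing_coloring V E k c \<Longrightarrow> V' \<subseteq> V \<Longrightarrow> E' \<subseteq> E \<Longrightarrow> packing_coloring V' E' k c"
proof -
  assume c: "packing_coloring V E k c" and s: "V' \<subseteq> V" "E' \<subseteq> E"
  show ?thesis unfolding packing_coloring_def
  proof (intro conjI ballI impI)
    fix v assume "v \<in> V'" then show "c v \<in> {1..k}" using c s unfolding packing_coloring_def by blast
  next
    fix u v assume uv: "u \<in> V'" "v \<in> V'" "u \<noteq> v \<and> c u = c v"
    show "\<not> dist_le V' E' u v (c u)"
    proof
      assume "dist_le V' E' u v (c u)"
      then have "dist_le V E u v (c u)" using dist_mono_g s by metis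
      moreover have "u \<in> V" "v \<in> V" using uv s by auto
      ultimately show False using c uv unfolding packing_coloring_def by blast
    qed
  qed
qed

lemma chi_sub: "finite V \<Longrightarrow> subgraph V' E' V E \<Longrightarrow> packing_chromatic V' E' \<le> packing_chromatic V E"
proof -
  assume f: "finite V" and s: "subgraph V' E' V E"
  obtain c where "packing_coloring V E (packing_chromatic V E) c" using chi_coloring[OF f] by blast
  then have "packing_coloring V' E' (packing_chromatic V E) c"
    using coloring_sub s unfolding subgraph_def by blast
  then show ?thesis by (rule chi_le)
qed

lemma chi_empty: "packing_chromatic {} E = 0"
proof -
  have "packing_coloring {} E 0 (\<lambda>_. 1)" unfolding packing_coloring_def by simp
  then show ?thesis using chi_le by fastforce
qed

lemma distinct_colors:
  assumes c: "packing_coloring V E K c" and S: "S \<subseteq> V" "finite S"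
    and n1: "\<forall>x\<in>S. c x \<noteq> 1" and d: "\<forall>x\<in>S. \<forall>y\<in>S. x \<noteq> y \<longrightarrow> dist_le V E x y 2"
  shows "card S \<le> K - 1"
proof -
  have col: "\<And>x. x \<in> S \<Longrightarrow> 2 \<le> c x \<and> c x \<le> K"
  proof -
    fix x assume x: "x \<in> S"
    then have "x \<in> V" using S by blast
    then have "c x \<in> {1..K}" using c unfolding packing_coloring_def by blast
    moreover have "c x \<noteq> 1" using n1 x by blast
    ultimately show "2 \<le> c x \<and> c x \<le> K" by simp
  qed
  have inj: "inj_on c S"
  proof (rule inj_onI, rule ccontr)
    fix x y assume xy: "x \<in> S" "y \<in> S" "c x = c y" "x \<noteq> y"
    have "dist_le V E x y 2" using d xy by blast
    moreover have "2 \<le> c x" using col[OF xy(1)] by simp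
    ultimately have "dist_le V E x y (c x)" by (rule dist_mono_n)
    moreover have "x \<in> V" "y \<in> V" using xy S by auto
    ultimately show False using c xy unfolding packing_coloring_def by blast
  qed
  have "c ` S \<subseteq> {2..K}" using col by auto
  then have "card (c ` S) \<le> card {2..K}" by (rule card_mono[rotated]) simp
  then show ?thesis using card_image[OF inj] by simp
qed


definition closed_in :: "'a set \<Rightarrow> 'a set set \<Rightarrow> 'a set \<Rightarrow> bool" where
  "closed_in V E X \<longleftrightarrow> (\<forall>a b. a \<in> X \<longrightarrow> a \<in> V \<longrightarrow> adj E a b \<longrightarrow> b \<in> V \<longrightarrow> b \<in> X)"

lemma walk_restrict: "is_walk V E p \<Longrightarrow> hd p \<in> X \<Longrightarrow> closed_in V E X \<Longrightarrow> is_walk (V \<inter> X) {e\<in>E. e \<subseteq> X} p"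
proof (induction p rule: induct_list012)
  case 1 then show ?case by (simp add: is_walk_def)
next
  case (2 x) then show ?case by simp
next
  case (3 x y zs)
  have yV: "y \<in> V" using walk_hd[of V E "y # zs"] 3 by simp
  have yX: "y \<in> X" using 3 yV unfolding closed_in_def by auto
  have "is_walk (V \<inter> X) {e\<in>E. e \<subseteq> X} (y # zs)" using 3 yX by simp
  moreover have "adj {e\<in>E. e \<subseteq> X} x y" using 3 yX by (auto simp: adj_def)
  ultimately show ?case using 3 by simp
qed

lemma graph_restrict: "graph V E \<Longrightarrow> graph (V \<inter> X) {e\<in>E. e \<subseteq> X}"
  unfolding graph_def
proof (intro ballI)
  fix e assume g: "\<forall>e\<in>E. \<exists>u v. u \<noteq> v \<and> u \<in> V \<and> v \<in> V \<and> e = {u, v}"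
    and e: "e \<in> {e \<in> E. e \<subseteq> X}"
  then have eE: "e \<in> E" and eX: "e \<subseteq> X" by auto
  obtain u v where uv: "u \<noteq> v" "u \<in> V" "v \<in> V" "e = {u, v}" using g eE by meson
  have "u \<in> X" "v \<in> X" using eX uv(4) by auto
  then show "\<exists>u v. u \<noteq> v \<and> u \<in> V \<inter> X \<and> v \<in> V \<inter> X \<and> e = {u, v}" using uv by blast
qed

lemma disconnected_chi:
  assumes fin: "finite V" and g: "graph V E" and uv: "u \<in> V" "v \<in> V"
    and nc: "\<not> (\<exists>n. dist_le V E u v n)"
    and crit: "\<forall>V' E'. subgraph V' E' V E \<and> (V', E') \<noteq> (V, E) \<longrightarrow> packing_chromatic V' E' < K"
  shows "packing_chromatic V E < K"
proof -
  define C where "C = {x. \<exists>n. dist_le V E u x n}"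
  define V1 where "V1 = V \<inter> C"
  define E1 where "E1 = {e\<in>E. e \<subseteq> C}"
  define V2 where "V2 = V \<inter> -C"
  define E2 where "E2 = {e\<in>E. e \<subseteq> -C}"
  have uC: "u \<in> C" unfolding C_def using dist_refl[OF uv(1)] by blast
  have vC: "v \<notin> C" unfolding C_def using nc by blast
  have clC: "closed_in V E C" unfolding closed_in_def
  proof (intro allI impI)
    fix a b assume "a \<in> C" "a \<in> V" "adj E a b" "b \<in> V"
    then obtain n where "dist_le V E u a n" unfolding C_def by blast
    then have "dist_le V E u b (n + 1)" by (rule dist_trans[OF _ dist_adj[OF \<open>a \<in> V\<close> \<open>b \<in> V\<close> \<open>adj E a b\<close>]])
    then show "b \<in> C" unfolding C_def by blast
  qed
  have clD: "closed_in V E (-C)" unfolding closed_in_def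
  proof (intro allI impI)
    fix a b assume "a \<in> -C" "a \<in> V" "adj E a b" "b \<in> V"
    show "b \<in> -C"
    proof
      assume "b \<in> C"
      have "a \<in> C" using clC[unfolded closed_in_def, rule_format, OF \<open>b \<in> C\<close> \<open>b \<in> V\<close> adj_sym[OF \<open>adj E a b\<close>] \<open>a \<in> V\<close>] .
      then show False using \<open>a \<in> -C\<close> by simp
    qed
  qed
  have s1: "subgraph V1 E1 V E"
    using graph_restrict[OF g, of C] unfolding subgraph_def V1_def E1_def by blast
  have "V1 \<noteq> V" using uv vC V1_def by blast
  then have s1': "(V1, E1) \<noteq> (V, E)" by simp
  have s2: "subgraph V2 E2 V E"
    using graph_restrict[OF g, of "-C"] unfolding subgraph_def V2_def E2_def by blast
  have "V2 \<noteq> V" using uv uC V2_def by blast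
  then have s2': "(V2, E2) \<noteq> (V, E)" by simp
  have f1: "finite V1" "finite V2" using fin V1_def V2_def by auto
  have lt1: "packing_chromatic V1 E1 < K" using crit s1 s1' by blast
  have lt2: "packing_chromatic V2 E2 < K" using crit s2 s2' by blast
  obtain c01 where c01: "packing_coloring V1 E1 (packing_chromatic V1 E1) c01"
    using chi_coloring[OF f1(1), of E1] by blast
  have c1: "packing_coloring V1 E1 (K - 1) c01"
    by (rule coloring_mono[OF c01]) (use lt1 in linarith)
  define c1 where "c1 = c01"
  note c1 = c1[folded c1_def]
  obtain c02 where c02: "packing_coloring V2 E2 (packing_chromatic V2 E2) c02"
    using chi_coloring[OF f1(2), of E2] by blast
  have c2: "packing_coloring V2 E2 (K - 1) c02"
    by (rule coloring_mono[OF c02]) (use lt2 in linarith)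
  define c2 where "c2 = c02"
  note c2 = c2[folded c2_def]
  define c where "c x = (if x \<in> C then c1 x else c2 x)" for x
  have "packing_coloring V E (K - 1) c"
    unfolding packing_coloring_def
  proof (intro conjI ballI impI)
    fix x assume "x \<in> V"
    then show "c x \<in> {1..K - 1}" using c1 c2 unfolding c_def packing_coloring_def V1_def V2_def
      by auto
  next
    fix x y assume xy: "x \<in> V" "y \<in> V" "x \<noteq> y \<and> c x = c y"
    show "\<not> dist_le V E x y (c x)"
    proof
      assume "dist_le V E x y (c x)"
      then obtain p where p: "is_walk V E p" "hd p = x" "last p = y" "length p \<le> Suc (c x)"
        unfolding dist_le_def by blast
      have pne: "p \<noteq> []" using p by (auto simp: is_walk_def)
      show False
      proof (cases "x \<in> C")
        case True
        have w: "is_walk V1 E1 p" unfolding V1_def E1_def using walk_restrict[OF p(1)] p(2) True clC by blast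
        then have "y \<in> V1" using p(3) pne unfolding is_walk_def by auto
        then have "y \<in> C" "x \<in> V1" using True xy V1_def by auto
        have "dist_le V1 E1 x y (c x)" using w p unfolding dist_le_def by blast
        then have "dist_le V1 E1 x y (c1 x)" "c1 x = c1 y" using xy True \<open>y \<in> C\<close> unfolding c_def by auto
        then show False using c1 xy \<open>y \<in> V1\<close> \<open>x \<in> V1\<close> unfolding packing_coloring_def by blast
      next
        case False
        have w: "is_walk V2 E2 p" unfolding V2_def E2_def using walk_restrict[OF p(1)] p(2) False clD by blast
        then have "y \<in> V2" using p(3) pne unfolding is_walk_def by auto
        then have "y \<notin> C" "x \<in> V2" using False xy V2_def by auto
        have "dist_le V2 E2 x y (c x)" using w p unfolding dist_le_def by blast
        then have "dist_le V2 E2 x y (c2 x)" "c2 x = c2 y" using xy False \<open>y \<notin> C\<close> unfolding c_def by auto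
        then show False using c2 xy \<open>y \<in> V2\<close> \<open>x \<in> V2\<close> unfolding packing_coloring_def by blast
      qed
    qed
  qed
  then have "packing_chromatic V E \<le> K - 1" by (rule chi_le)
  then show ?thesis using lt1 by linarith
qed


lemma acyclic_by_parent:
  fixes d :: "'a \<Rightarrow> nat"
  assumes h: "\<And>x y. adj E x y \<Longrightarrow> d y \<le> d x \<Longrightarrow> y = par x"
  shows "acyclic_graph V E"
  unfolding acyclic_graph_def
proof
  assume "\<exists>p. is_cycle V E p"
  then obtain p where p: "length p \<ge> 3" "distinct p" "is_walk V E p" "adj E (last p) (hd p)"
    unfolding is_cycle_def by blast
  define n where "n = length p"
  have ne: "p \<noteq> []" using p by auto
  have "Max (d ` set p) \<in> d ` set p" using ne by (intro Max_in) auto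
  then obtain x where x: "x \<in> set p" "d x = Max (d ` set p)" by auto
  have mx: "\<And>y. y \<in> set p \<Longrightarrow> d y \<le> d x" using x by simp
  obtain i where i: "i < n" "p ! i = x" using x(1) unfolding n_def by (auto simp: in_set_conv_nth)
  have step: "\<And>j. Suc j < n \<Longrightarrow> adj E (p ! j) (p ! Suc j)" using p(3) unfolding is_walk_def n_def by blast
  have wrap: "adj E (p ! (n - 1)) (p ! 0)" using p(4) ne unfolding n_def by (simp add: last_conv_nth hd_conv_nth)
  have inset: "\<And>j. j < n \<Longrightarrow> p ! j \<in> set p" unfolding n_def by simp
  have par: "\<And>j. j < n \<Longrightarrow> adj E x (p ! j) \<Longrightarrow> p ! j = par x" using h mx inset by blast
  have dist: "\<And>a b. a < n \<Longrightarrow> b < n \<Longrightarrow> p ! a = p ! b \<Longrightarrow> a = b"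
    using p(2) nth_eq_iff_index_eq unfolding n_def by blast
  have n3: "n \<ge> 3" using p n_def by simp
  consider "i = 0" | "i = n - 1" | "0 < i" "i < n - 1" using i by linarith
  then show False
  proof cases
    case 1
    have a: "p ! 1 = par x" using par[of 1] step[of 0] 1 i n3 by simp
    have "adj E x (p ! (n - 1))" using adj_sym[OF wrap] 1 i by simp
    then have b: "p ! (n - 1) = par x" using par[of "n - 1"] n3 by simp
    show False using dist[of 1 "n - 1"] a b n3 by simp
  next
    case 2
    have a: "p ! 0 = par x" using par[of 0] wrap 2 i n3 by simp
    have "Suc (n - 2) = n - 1" using n3 by simp
    then have "adj E (p ! (n - 2)) x" using step[of "n - 2"] 2 i n3 by simp
    then have "adj E x (p ! (n - 2))" by (rule adj_sym)
    then have b: "p ! (n - 2) = par x" using par[of "n - 2"] n3 by simp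
    show False using dist[of 0 "n - 2"] a b n3 by simp
  next
    case 3
    have a: "p ! (Suc i) = par x" using par[of "Suc i"] step[of i] 3 i by simp
    have "adj E (p ! (i - 1)) x" using step[of "i - 1"] 3 i by simp
    then have "adj E x (p ! (i - 1))" by (rule adj_sym)
    then have b: "p ! (i - 1) = par x" using par[of "i - 1"] i by simp
    have si: "Suc i < n" using 3 by linarith
    have im: "i - 1 < n" using i by linarith
    have "Suc i = i - 1" using dist[OF si im] a b by simp
    then show False by linarith
  qed
qed



definition tV :: "nat \<Rightarrow> nat set" where
  "tV k = {0..k-1} \<union> (\<lambda>(j,i). j*k+i) ` ({1..k-1} \<times> {..<k-1})"

definition tE :: "nat \<Rightarrow> nat set set" where
  "tE k = (\<lambda>j. {0,j}) ` {1..k-1} \<union> (\<lambda>(j,i). {j, j*k+i}) ` ({1..k-1} \<times> {..<k-1})"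

lemma leaf_facts:
  assumes "2 \<le> (k::nat)" "1 \<le> j" "i < k - 1"
  shows "k \<le> j*k+i" "(j*k+i) div k = j"
proof -
  have "1*k \<le> j*k" using assms(2) by (rule mult_le_mono1)
  then have "k \<le> j*k" by (simp only: mult_1)
  then show "k \<le> j*k+i" by (rule trans_le_add1)
  show "(j*k+i) div k = j" using assms by simp
qed

lemma tE_cases:
  "e \<in> tE k \<Longrightarrow> (\<exists>j\<in>{1..k-1}. e = {0,j}) \<or> (\<exists>j\<in>{1..k-1}. \<exists>i<k-1. e = {j, j*k+i})"
proof -
  assume "e \<in> tE k"
  then have "e \<in> (\<lambda>j. {0,j}) ` {1..k-1} \<or> e \<in> (\<lambda>(j,i). {j, j*k+i}) ` ({1..k-1} \<times> {..<k-1})"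
    unfolding tE_def by (simp only: Un_iff)
  then show ?thesis
  proof
    assume "e \<in> (\<lambda>j. {0,j}) ` {1..k-1}"
    then obtain j where j: "j \<in> {1..k-1}" "e = {0,j}" by (rule imageE)
    show ?thesis by (rule disjI1, rule bexI[where x=j], rule j(2), rule j(1))
  next
    assume "e \<in> (\<lambda>(j,i). {j, j*k+i}) ` ({1..k-1} \<times> {..<k-1})"
    then obtain p where p: "p \<in> {1..k-1} \<times> {..<k-1}" "e = (\<lambda>(j,i). {j, j*k+i}) p" by (rule imageE)
    obtain j i where ji: "p = (j,i)" by (cases p)
    have j: "j \<in> {1..k-1}" and i: "i < k-1" using p(1) ji by auto
    have e: "e = {j, j*k+i}" using p(2) ji by simp
    show ?thesis by (rule disjI2, rule bexI[where x=j], rule exI[where x=i], rule conjI[OF i e], rule j)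
  qed
qed

lemma adj_tE:
  "adj (tE k) x y \<Longrightarrow> (\<exists>j\<in>{1..k-1}. {x,y} = {0,j}) \<or> (\<exists>j\<in>{1..k-1}. \<exists>i<k-1. {x,y} = {j, j*k+i})"
  unfolding adj_def by (rule tE_cases)

lemma adj_root: "j \<in> {1..k-1} \<Longrightarrow> adj (tE k) 0 j \<and> adj (tE k) j 0"
proof -
  assume j: "j \<in> {1..k-1}"
  have "{0,j} \<in> tE k" unfolding tE_def using j by blast
  moreover have "{j,0} = {0,j}" by (rule insert_commute)
  ultimately show ?thesis unfolding adj_def by simp
qed

lemma adj_leaf: "j \<in> {1..k-1} \<Longrightarrow> i < k - 1 \<Longrightarrow> adj (tE k) j (j*k+i) \<and> adj (tE k) (j*k+i) j"
proof -
  assume j: "j \<in> {1..k-1}" and i: "i < k - 1"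
  have "(j,i) \<in> {1..k-1} \<times> {..<k-1}" using j i by simp
  then have "(\<lambda>(j,i). {j, j*k+i}) (j,i) \<in> tE k" unfolding tE_def by blast
  then have "{j, j*k+i} \<in> tE k" by simp
  moreover have "{j*k+i, j} = {j, j*k+i}" by (rule insert_commute)
  ultimately show ?thesis unfolding adj_def by simp
qed

lemma tV_leaf: "j \<in> {1..k-1} \<Longrightarrow> i < k - 1 \<Longrightarrow> j*k+i \<in> tV k"
  unfolding tV_def by auto

lemma tV_small: "j \<le> k - 1 \<Longrightarrow> j \<in> tV k"
  unfolding tV_def by auto

lemma tV_cases: "x \<in> tV k \<Longrightarrow> x \<le> k - 1 \<or> (\<exists>j\<in>{1..k-1}. \<exists>i<k-1. x = j*k+i)"
  unfolding tV_def by auto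

lemma t_graph: assumes "2 \<le> k" shows "graph (tV k) (tE k)"
  unfolding graph_def
proof
  fix e assume "e \<in> tE k"
  from tE_cases[OF this] consider j where "j \<in> {1..k-1}" "e = {0,j}" | j i where "j \<in> {1..k-1}" "i < k-1" "e = {j, j*k+i}"
    by blast
  then show "\<exists>u v. u \<noteq> v \<and> u \<in> tV k \<and> v \<in> tV k \<and> e = {u, v}"
  proof cases
    case 1
    have a: "(0::nat) \<noteq> j" "0 \<in> tV k" "j \<in> tV k" using 1 tV_small[of 0 k] tV_small[of j k] by auto
    show ?thesis by (intro exI[where x=0] exI[where x=j] conjI a 1(2))
  next
    case 2
    have "k \<le> j*k+i" using leaf_facts assms 2 by auto
    then have "j \<noteq> j*k+i" using 2 by auto
    moreover have "j \<in> tV k" "j*k+i \<in> tV k" using 2 tV_small[of j k] tV_leaf[of j k i] by auto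
    ultimately show ?thesis by (intro exI[where x=j] exI[where x="j*k+i"] conjI 2(3))
  qed
qed

lemma t_finite: "finite (tV k)" "finite (tE k)"
  unfolding tV_def tE_def by auto

lemma t_to_root: assumes "2 \<le> k" "x \<in> tV k" shows "dist_le (tV k) (tE k) x 0 2"
proof -
  have z: "0 \<in> tV k" using tV_small by auto
  consider "x = 0" | "1 \<le> x" "x \<le> k - 1" | j i where "j \<in> {1..k-1}" "i < k-1" "x = j*k+i"
    using tV_cases[OF assms(2)] by force
  then show ?thesis
  proof cases
    case 1
    have "dist_le (tV k) (tE k) 0 0 2" by (rule dist_mono_n[OF dist_refl[OF z]]) simp
    then show ?thesis using 1 by simp
  next
    case 2
    have "x \<in> {1..k-1}" using 2 by (simp only: atLeastAtMost_iff)
    then have "adj (tE k) x 0" by (rule conjunct2[OF adj_root])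
    then have "dist_le (tV k) (tE k) x 0 1" by (rule dist_adj[OF assms(2) z])
    then show ?thesis by (rule dist_mono_n) simp
  next
    case 3
    have a1: "adj (tE k) x j" unfolding 3(3) by (rule conjunct2[OF adj_leaf[OF 3(1) 3(2)]])
    have a2: "adj (tE k) j 0" by (rule conjunct2[OF adj_root[OF 3(1)]])
    have "j \<in> tV k" using tV_small 3 by auto
    then show ?thesis by (rule dist_2[OF assms(2) _ z a1 a2])
  qed
qed

lemma t_connected: assumes "2 \<le> k" shows "connected_graph (tV k) (tE k)"
  unfolding connected_graph_def
proof (intro ballI)
  fix u v assume uv: "u \<in> tV k" "v \<in> tV k"
  have a: "dist_le (tV k) (tE k) u 0 2" by (rule t_to_root[OF assms uv(1)])
  have b: "dist_le (tV k) (tE k) 0 v 2" by (rule dist_sym[OF t_to_root[OF assms uv(2)]])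
  show "\<exists>n. dist_le (tV k) (tE k) u v n" using dist_trans[OF a b] by blast
qed

lemma t_acyclic: assumes "2 \<le> k" shows "acyclic_graph (tV k) (tE k)"
proof (rule acyclic_by_parent[where d = "\<lambda>v. if v = 0 then 0 else if v < k then 1 else (2::nat)"
      and par = "\<lambda>v. if v < k then 0 else v div k"])
  fix x y assume a: "adj (tE k) x y"
    and dl: "(if y = 0 then 0 else if y < k then 1 else (2::nat)) \<le> (if x = 0 then 0 else if x < k then 1 else 2)"
  from a consider j where "j \<in> {1..k-1}" "{x,y} = {0,j}" | j i where "j \<in> {1..k-1}" "i < k-1" "{x,y} = {j, j*k+i}"
    using adj_tE by blast
  then show "y = (if x < k then 0 else x div k)"
  proof cases
    case 1
    then have jk: "1 \<le> j" "j < k" using assms by auto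
    from 1 consider "x = 0" "y = j" | "x = j" "y = 0" by (auto simp: doubleton_eq_iff)
    then show ?thesis
    proof cases
      case 1 then show ?thesis using dl jk by simp
    next
      case 2 then show ?thesis using jk by simp
    qed
  next
    case 2
    then have jk: "1 \<le> j" "j < k" using assms by auto
    have L: "k \<le> j*k+i" "(j*k+i) div k = j" using leaf_facts assms 2 by auto
    from 2 consider "x = j" "y = j*k+i" | "x = j*k+i" "y = j" by (auto simp: doubleton_eq_iff)
    then show ?thesis
    proof cases
      case 1 then show ?thesis using dl jk L by simp
    next
      case 2 then show ?thesis using jk L by simp
    qed
  qed
qed

lemma t_tree: assumes "2 \<le> k" shows "tree (tV k) (tE k)"
proof -
  have "0 \<in> tV k" by (rule tV_small) simp
  then have ne: "tV k \<noteq> {}" by blast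
  show ?thesis unfolding tree_def
    by (intro conjI t_graph[OF assms] t_finite(1) ne t_connected[OF assms] t_acyclic[OF assms])
qed

lemma t_upper: assumes "2 \<le> k" shows "packing_coloring (tV k) (tE k) k (\<lambda>v. if 1 \<le> v \<and> v < k then v + 1 else 1)"
  (is "packing_coloring _ _ _ ?c")
  unfolding packing_coloring_def
proof (intro conjI ballI impI)
  fix v assume "v \<in> tV k" then show "?c v \<in> {1..k}" using assms by auto
next
  fix u v assume uv: "u \<in> tV k" "v \<in> tV k" "u \<noteq> v \<and> ?c u = ?c v"
  have cuv: "?c u = ?c v" and une: "u \<noteq> v" using uv(3) by blast+
  have nu: "\<not> (1 \<le> u \<and> u < k)"
  proof
    assume hu: "1 \<le> u \<and> u < k"
    show False
    proof (cases "1 \<le> v \<and> v < k")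
      case True then have "u + 1 = v + 1" using cuv hu by simp
      then show False using une by simp
    next
      case False
      have a: "(if 1 \<le> v \<and> v < k then v + 1 else 1) = (1::nat)" using False by (rule if_not_P)
      have b: "(if 1 \<le> u \<and> u < k then u + 1 else 1) = u + 1" using hu by (rule if_P)
      have "u + 1 = 1" using cuv a b by simp
      then show False using hu by simp
    qed
  qed
  have nv: "\<not> (1 \<le> v \<and> v < k)"
  proof
    assume hv: "1 \<le> v \<and> v < k"
    have "?c u = 1" using nu by simp
    moreover have "?c v = v + 1" using hv by simp
    ultimately show False using cuv hv by simp
  qed
  have cu: "?c u = 1" using nu by simp
  show "\<not> dist_le (tV k) (tE k) u v (?c u)"
  proof
    assume "dist_le (tV k) (tE k) u v (?c u)"
    then have "dist_le (tV k) (tE k) u v 1" using cu by simp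
    then have "u = v \<or> adj (tE k) u v" by (rule dist_1_cases)
    then have "adj (tE k) u v" using une by blast
    from adj_tE[OF this] consider j where "j \<in> {1..k-1}" "{u,v} = {0,j}" | j i where "j \<in> {1..k-1}" "i < k-1" "{u,v} = {j, j*k+i}"
      by blast
    then show False
    proof cases
      case 1
      then have jk: "1 \<le> j" "j < k" using assms by auto
      from 1(2) have "(u = 0 \<and> v = j) \<or> (u = j \<and> v = 0)" by (simp only: doubleton_eq_iff)
      then show False using nu nv jk by blast
    next
      case 2
      then have jk: "1 \<le> j" "j < k" using assms by auto
      from 2(3) have "(u = j \<and> v = j*k+i) \<or> (u = j*k+i \<and> v = j)" by (simp only: doubleton_eq_iff)
      then show False using nu nv jk by blast
    qed
  qed
qed

lemma t_lower: assumes k2: "2 \<le> k" and c: "packing_coloring (tV k) (tE k) K c" shows "k \<le> K"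
proof (cases "\<exists>j\<in>{1..k-1}. c j = 1")
  case True
  then obtain j where j: "j \<in> {1..k-1}" "c j = 1" by blast
  define S where "S = (\<lambda>i. j*k+i) ` {..<k-1}"
  have jV: "j \<in> tV k" using tV_small j by auto
  have inj: "inj_on (\<lambda>i. j*k+i) {..<k-1}" by (rule inj_onI) simp
  have cardS: "card S = k - 1" unfolding S_def using card_image[OF inj] by simp
  have SV: "S \<subseteq> tV k" unfolding S_def using tV_leaf j by auto
  have adjS: "\<And>x. x \<in> S \<Longrightarrow> adj (tE k) x j \<and> adj (tE k) j x"
  proof -
    fix x assume "x \<in> S"
    then obtain i where i: "i < k - 1" "x = j*k+i" unfolding S_def by blast
    have h: "adj (tE k) j (j*k+i) \<and> adj (tE k) (j*k+i) j" by (rule adj_leaf[OF j(1) i(1)])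
    show "adj (tE k) x j \<and> adj (tE k) j x" unfolding i(2) using h by blast
  qed
  have n1: "\<forall>x\<in>S. c x \<noteq> 1"
  proof (intro ballI notI)
    fix x assume x: "x \<in> S" "c x = 1"
    then obtain i where i: "i < k - 1" "x = j*k+i" unfolding S_def by auto
    have "k \<le> x" using leaf_facts[OF k2 _ i(1)] i j by auto
    then have "x \<noteq> j" using j by auto
    moreover have xV: "x \<in> tV k" using x(1) SV by blast
    moreover have "dist_le (tV k) (tE k) x j 1"
      by (rule dist_adj[OF xV jV conjunct1[OF adjS[OF x(1)]]])
    moreover have "c x = c j" using x(2) j(2) by simp
    ultimately have "\<not> dist_le (tV k) (tE k) x j (c x)" using c jV unfolding packing_coloring_def by blast
    then show False using \<open>dist_le (tV k) (tE k) x j 1\<close> x(2) by simp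
  qed
  have d: "\<forall>x\<in>S. \<forall>y\<in>S. x \<noteq> y \<longrightarrow> dist_le (tV k) (tE k) x y 2"
  proof (intro ballI impI)
    fix x y assume xy: "x \<in> S" "y \<in> S"
    have xV: "x \<in> tV k" "y \<in> tV k" using xy SV by auto
    show "dist_le (tV k) (tE k) x y 2"
      by (rule dist_2[OF xV(1) jV xV(2) conjunct1[OF adjS[OF xy(1)]] conjunct2[OF adjS[OF xy(2)]]])
  qed
  have "card S \<le> K - 1" using distinct_colors[OF c SV _ n1 d] unfolding S_def by simp
  then show ?thesis using cardS k2 by linarith
next
  case False
  define S where "S = {1..k-1}"
  have SV: "S \<subseteq> tV k" unfolding S_def using tV_small by auto
  have z: "0 \<in> tV k" using tV_small by auto
  have adjS: "\<And>x. x \<in> S \<Longrightarrow> adj (tE k) x 0 \<and> adj (tE k) 0 x"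
    using adj_root unfolding S_def by blast
  have d: "\<forall>x\<in>S. \<forall>y\<in>S. x \<noteq> y \<longrightarrow> dist_le (tV k) (tE k) x y 2"
  proof (intro ballI impI)
    fix x y assume xy: "x \<in> S" "y \<in> S"
    have xV: "x \<in> tV k" "y \<in> tV k" using xy SV by auto
    show "dist_le (tV k) (tE k) x y 2"
      by (rule dist_2[OF xV(1) z xV(2) conjunct1[OF adjS[OF xy(1)]] conjunct2[OF adjS[OF xy(2)]]])
  qed
  have n1: "\<forall>x\<in>S. c x \<noteq> 1" using False S_def by blast
  have "card S \<le> K - 1" using distinct_colors[OF c SV _ n1 d] unfolding S_def by simp
  then show ?thesis using k2 unfolding S_def by simp
qed

lemma t_chi: assumes "2 \<le> k" shows "packing_chromatic (tV k) (tE k) = k"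
proof (rule antisym)
  show "packing_chromatic (tV k) (tE k) \<le> k" using chi_le[OF t_upper[OF assms]] .
  show "k \<le> packing_chromatic (tV k) (tE k)"
    by (rule chi_ge[OF t_finite(1)]) (rule t_lower[OF assms])
qed



lemma subgraph_trans: "subgraph V1 E1 V2 E2 \<Longrightarrow> subgraph V2 E2 V3 E3 \<Longrightarrow> subgraph V1 E1 V3 E3"
  unfolding subgraph_def by (meson order_trans)

lemma graph_finite_E: "graph V E \<Longrightarrow> finite V \<Longrightarrow> finite E"
proof -
  assume g: "graph V E" and f: "finite V"
  have "E \<subseteq> Pow V"
  proof
    fix e assume "e \<in> E"
    then obtain u v where "u \<in> V" "v \<in> V" "e = {u, v}" using g unfolding graph_def by meson
    then show "e \<in> Pow V" by simp
  qed
  then show ?thesis using f by (meson finite_Pow_iff finite_subset)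
qed

theorem corollary3p6:
  fixes k :: nat
  assumes "k \<ge> 2"
  shows "\<exists>(V :: nat set) E. tree V E \<and> packing_critical V E \<and> packing_chromatic V E = k"
proof -
  define V0 where "V0 = tV k"
  define E0 where "E0 = tE k"
  have T0: "tree V0 E0" unfolding V0_def E0_def by (rule t_tree[OF assms])
  have chi0: "packing_chromatic V0 E0 = k" unfolding V0_def E0_def by (rule t_chi[OF assms])
  have g0: "graph V0 E0" and f0: "finite V0" using T0 unfolding tree_def by blast+
  have fE0: "finite E0" by (rule graph_finite_E[OF g0 f0])
  define P where "P = (\<lambda>H :: nat set \<times> nat set set. subgraph (fst H) (snd H) V0 E0 \<and> k \<le> packing_chromatic (fst H) (snd H))"
  define m where "m = (\<lambda>H :: nat set \<times> nat set set. card (fst H) + card (snd H))"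
  have "P (V0, E0)" unfolding P_def subgraph_def using g0 chi0 by simp
  then obtain H where H: "P H" and Hmin: "\<And>H'. P H' \<Longrightarrow> m H \<le> m H'"
    using ex_has_least_nat[of P "(V0, E0)" m] by blast
  obtain VH EH where HVE: "H = (VH, EH)" by (cases H)
  have subH: "subgraph VH EH V0 E0" and geH: "k \<le> packing_chromatic VH EH"
    using H HVE unfolding P_def by auto
  have sVH: "VH \<subseteq> V0" and sEH: "EH \<subseteq> E0" and gH: "graph VH EH" using subH unfolding subgraph_def by auto
  have fVH: "finite VH" by (rule finite_subset[OF sVH f0])
  have fEH: "finite EH" by (rule finite_subset[OF sEH fE0])
  have chiH: "packing_chromatic VH EH = k"
    using chi_sub[OF f0 subH] chi0 geH by simp
  have proper: "packing_chromatic V' E' < k" if s: "subgraph V' E' VH EH" and ne: "(V', E') \<noteq> (VH, EH)" for V' E'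
  proof (rule ccontr)
    assume "\<not> packing_chromatic V' E' < k"
    then have "P (V', E')" unfolding P_def using subgraph_trans[OF s subH] by simp
    then have le: "m H \<le> m (V', E')" by (rule Hmin)
    have s1: "V' \<subseteq> VH" "E' \<subseteq> EH" using s unfolding subgraph_def by auto
    have c1: "card V' \<le> card VH" using s1(1) fVH by (rule card_mono[rotated])
    have c2: "card E' \<le> card EH" using s1(2) fEH by (rule card_mono[rotated])
    have "V' \<noteq> VH \<or> E' \<noteq> EH" using ne by simp
    then have "card V' < card VH \<or> card E' < card EH"
    proof
      assume "V' \<noteq> VH"
      then have "V' \<subset> VH" using s1(1) by (simp only: psubset_eq simp_thms)
      then show ?thesis using psubset_card_mono[OF fVH] by (intro disjI1)
    next
      assume "E' \<noteq> EH"
      then have "E' \<subset> EH" using s1(2) by (simp only: psubset_eq simp_thms)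
      then show ?thesis using psubset_card_mono[OF fEH] by (intro disjI2)
    qed
    then have "card V' + card E' < card VH + card EH" using c1 c2 by (elim disjE) linarith+
    then have "m (V', E') < m H" unfolding m_def HVE by simp
    then show False using le by simp
  qed
  have crit: "packing_critical VH EH"
    unfolding packing_critical_def using proper chiH by simp
  have neH: "VH \<noteq> {}"
  proof
    assume "VH = {}"
    then have "packing_chromatic VH EH = 0" using chi_empty by simp
    then show False using chiH assms by simp
  qed
  have conH: "connected_graph VH EH"
    unfolding connected_graph_def
  proof (intro ballI)
    fix u v assume uv: "u \<in> VH" "v \<in> VH"
    show "\<exists>n. dist_le VH EH u v n"
    proof (rule ccontr)
      assume nc: "\<not> (\<exists>n. dist_le VH EH u v n)"
      have "\<forall>V' E'. subgraph V' E' VH EH \<and> (V', E') \<noteq> (VH, EH) \<longrightarrow> packing_chromatic V' E' < k"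
        using proper by blast
      then have "packing_chromatic VH EH < k" using disconnected_chi[OF fVH gH uv(1) uv(2) nc] by blast
      then show False using chiH by simp
    qed
  qed
  have acH: "acyclic_graph VH EH"
    unfolding acyclic_graph_def
  proof
    assume "\<exists>p. is_cycle VH EH p"
    then obtain p where p: "is_cycle VH EH p" by blast
    have "is_cycle V0 E0 p" using p walk_mono[OF _ sVH sEH] sEH unfolding is_cycle_def adj_def by blast
    then show False using T0 unfolding tree_def acyclic_graph_def by blast
  qed
  have "tree VH EH" unfolding tree_def using gH fVH neH conH acH by blast
  then show ?thesis using crit chiH by blast
qed


end
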